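(* Let $k\ge 2$ be an integer. There exists a combinatorial auction (with bids equal to the true valuations) whose winner set $W$ has $|W|=k$ and which has a unique MRC outcome $\pi^{MRC}$, such that $\pi^{MRC}$ gives utility $0$ to exactly $k-2$ winners, while for each of these $k-2$ winners $i$ there exists a core outcome $\pi\in U$ with $\pi_i>0$.
   Context: A combinatorial auction (CA) has a finite set of bidders $N=\{1,\dots,n\}$, a finite set of items $M$, and for each bidder $i$ a valuation $v_i:2^M\to\mathbb{R}_{\ge 0}$ with $v_i(\emptyset)=0$. For $S\subseteq N$ let $w(S)=\max\{\sum_{i\in S}v_i(a_i): a_i\subseteq M,\ a_i\cap a_j=\emptyset\ (i\ne j)\}$ (with $w(\emptyset)=0$). Fix an allocation $(a^*_i)_{i\in N}$ attaining $w(N)$; the winner set is $W=\{i: a^*_i\neq\emptyset\}$. A utility outcome is a vector $\pi\in\mathbb{R}^N$ (bidder $i$ pays $v_i(a^*_i)-\pi_i$). The core is $U=\{\pi\in\mathbb{R}^N:\ \pi_i\ge 0\ \forall i\in N,\ \sum_{i\in N\setminus S}\pi_i\le w(N)-w(S)\ \forall S\subseteq N\}$. An MRC (minimum-revenue-core) outcome is a $\pi\in U$ maximizing $\sum_{i\in N}\pi_i$ over $U$. *)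

theory Defs
  imports Complex_Main
begin

definition is_valuation :: "nat set \<Rightarrow> nat set \<Rightarrow> (nat \<Rightarrow> nat set \<Rightarrow> real) \<Rightarrow> bool" where
  "is_valuation N M v \<longleftrightarrow> (\<forall>i\<in>N. v i {} = 0 \<and> (\<forall>X. X \<subseteq> M \<longrightarrow> v i X \<ge> 0))"

definition feasible_alloc :: "nat set \<Rightarrow> nat set \<Rightarrow> (nat \<Rightarrow> nat set) \<Rightarrow> bool" where
  "feasible_alloc M S a \<longleftrightarrow> (\<forall>i\<in>S. a i \<subseteq> M) \<and> (\<forall>i\<in>S. \<forall>j\<in>S. i \<noteq> j \<longrightarrow> a i \<inter> a j = {})"

definition wval :: "nat set \<Rightarrow> (nat \<Rightarrow> nat set \<Rightarrow> real) \<Rightarrow> nat set \<Rightarrow> real" where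
  "wval M v S = Max {(\<Sum>i\<in>S. v i (a i)) | a. feasible_alloc M S a}"

definition efficient_alloc :: "nat set \<Rightarrow> nat set \<Rightarrow> (nat \<Rightarrow> nat set \<Rightarrow> real) \<Rightarrow> (nat \<Rightarrow> nat set) \<Rightarrow> bool" where
  "efficient_alloc N M v a \<longleftrightarrow> feasible_alloc M N a \<and> (\<Sum>i\<in>N. v i (a i)) = wval M v N"

definition winners :: "nat set \<Rightarrow> (nat \<Rightarrow> nat set) \<Rightarrow> nat set" where
  "winners N a = {i\<in>N. a i \<noteq> {}}"

(* core; utility vectors in R^N are represented as functions vanishing outside N *)
definition core :: "nat set \<Rightarrow> nat set \<Rightarrow> (nat \<Rightarrow> nat set \<Rightarrow> real) \<Rightarrow> (nat \<Rightarrow> real) set" where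
  "core N M v = {\<pi>. (\<forall>i. i \<notin> N \<longrightarrow> \<pi> i = 0) \<and> (\<forall>i\<in>N. \<pi> i \<ge> 0) \<and>
      (\<forall>S. S \<subseteq> N \<longrightarrow> (\<Sum>i\<in>N - S. \<pi> i) \<le> wval M v N - wval M v S)}"

definition is_MRC :: "nat set \<Rightarrow> nat set \<Rightarrow> (nat \<Rightarrow> nat set \<Rightarrow> real) \<Rightarrow> (nat \<Rightarrow> real) \<Rightarrow> bool" where
  "is_MRC N M v \<pi> \<longleftrightarrow> \<pi> \<in> core N M v \<and> (\<forall>\<pi>'\<in>core N M v. (\<Sum>i\<in>N. \<pi>' i) \<le> (\<Sum>i\<in>N. \<pi> i))"

end

theory Submission
  imports Defs "HOL-Library.FuncSet"
begin

lemma fin_vals: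
  assumes "finite M" "finite S"
  shows "finite {(\<Sum>i\<in>S. v i (a i)) | a. feasible_alloc M S a}"
proof -
  have "{(\<Sum>i\<in>S. v i (a i)) | a. feasible_alloc M S a}
        \<subseteq> (\<lambda>b. \<Sum>i\<in>S. v i (b i)) ` (Pi\<^sub>E S (\<lambda>_. Pow M))"
  proof
    fix x assume "x \<in> {(\<Sum>i\<in>S. v i (a i)) | a. feasible_alloc M S a}"
    then obtain a where x: "x = (\<Sum>i\<in>S. v i (a i))" and f: "feasible_alloc M S a" by blast
    have "restrict a S \<in> Pi\<^sub>E S (\<lambda>_. Pow M)" using f unfolding feasible_alloc_def by auto
    moreover have "x = (\<Sum>i\<in>S. v i (restrict a S i))" using x by simp
    ultimately show "x \<in> (\<lambda>b. \<Sum>i\<in>S. v i (b i)) ` (Pi\<^sub>E S (\<lambda>_. Pow M))" by blast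
  qed
  moreover have "finite (Pi\<^sub>E S (\<lambda>_. Pow M))" using assms by (simp add: finite_PiE)
  ultimately show ?thesis by (meson finite_imageI finite_subset)
qed

lemma wval_ge:
  assumes "finite M" "finite S" "feasible_alloc M S a"
  shows "(\<Sum>i\<in>S. v i (a i)) \<le> wval M v S"
  unfolding wval_def using fin_vals[OF assms(1,2), of v] assms(3)
  by (intro Max_ge) auto

lemma wval_le:
  assumes "finite M" "finite S" "\<And>a. feasible_alloc M S a \<Longrightarrow> (\<Sum>i\<in>S. v i (a i)) \<le> B"
  shows "wval M v S \<le> B"
proof -
  have ne: "feasible_alloc M S (\<lambda>_. {})" unfolding feasible_alloc_def by auto
  show ?thesis unfolding wval_def using fin_vals[OF assms(1,2), of v] assms(3) ne
    by (subst Max_le_iff) auto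
qed

definition vv :: "nat \<Rightarrow> nat \<Rightarrow> nat set \<Rightarrow> real" where
  "vv k i X = (if i < k then (if i \<in> X then 2 else 0)
     else if i = k then (if insert 0 {2..<k+1} \<subseteq> X then 2 * real k - 3 else 0)
     else if i = k+1 then (if {1..<k+1} \<subseteq> X then 2 * real k - 3 else 0) else 0)"

definition aa :: "nat \<Rightarrow> nat \<Rightarrow> nat set" where
  "aa k i = (if i < k then {i} else {})"

lemma lt_split: "2 \<le> k \<Longrightarrow> {..<k} = insert 0 (insert 1 {2..<(k::nat)})" by auto

lemma sumk: "2 \<le> (k::nat) \<Longrightarrow> (\<Sum>i<k. f i) = f 0 + f 1 + (\<Sum>i\<in>{2..<k}. (f i::real))"
  by (simp add: lt_split)

lemma sumN: "(\<Sum>i<(k::nat)+2. f i) = (\<Sum>i<k. f i) + f k + (f (k+1)::real)"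
proof -
  have "{..<k+2} = insert (k+1) (insert k {..<k})" by auto
  then show ?thesis by simp
qed

lemma vv_empty: "2 \<le> k \<Longrightarrow> vv k i {} = 0"
  unfolding vv_def by auto

lemma vv_nonneg: "2 \<le> k \<Longrightarrow> vv k i X \<ge> 0"
  unfolding vv_def by auto

lemma sumP:
  fixes \<pi> :: "nat \<Rightarrow> real"
  shows "(\<Sum>i\<in>{..<k+2} - S. \<pi> i) = (\<Sum>i<k+2. if i \<notin> S then \<pi> i else 0)"
  using sum.inter_restrict[of "{..<k+2}" \<pi> "-S"]
  by (simp add: Diff_eq if_distrib cong: if_cong)

lemma key:
  fixes \<pi> :: "nat \<Rightarrow> real"
  assumes k: "2 \<le> k" and S: "S \<subseteq> {..<k+2}" and fa: "feasible_alloc {..<k+1} S a"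
    and nn: "\<And>i. \<pi> i \<ge> 0" and big: "\<And>i. k \<le> i \<Longrightarrow> \<pi> i = 0"
    and c0: "\<pi> 0 + (\<Sum>i\<in>{2..<k}. \<pi> i) \<le> 1" and c1: "\<pi> 1 + (\<Sum>i\<in>{2..<k}. \<pi> i) \<le> 1"
  shows "(\<Sum>i\<in>S. vv k i (a i)) \<le> 2 * real k - (\<Sum>i\<in>{..<k+2} - S. \<pi> i)"
proof -
  define g where "g i = (if i \<in> S then vv k i (a i) else 0)" for i
  define p where "p i = (if i \<notin> S then \<pi> i else 0)" for i
  have fS: "finite S" using S finite_subset by blast
  have G: "(\<Sum>i\<in>S. vv k i (a i)) = (\<Sum>i<k+2. g i)"
    unfolding g_def using sum.inter_restrict[of "{..<k+2}" "\<lambda>i. vv k i (a i)" S] S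
    by (simp add: Int_absorb1)
  have P: "(\<Sum>i\<in>{..<k+2} - S. \<pi> i) = (\<Sum>i<k+2. p i)"
    unfolding p_def by (rule sumP)
  have pk: "p k = 0" "p (k+1) = 0" using big unfolding p_def by auto
  have PP: "(\<Sum>i<k+2. p i) = p 0 + p 1 + (\<Sum>i\<in>{2..<k}. p i)"
    using sumN[of p k] pk sumk[OF k, of p] by simp
  have pC: "(\<Sum>i\<in>{2..<k}. p i) \<le> (\<Sum>i\<in>{2..<k}. \<pi> i)"
    by (rule sum_mono) (auto simp: p_def nn)
  have pp: "p 0 \<le> \<pi> 0" "p 1 \<le> \<pi> 1" using nn by (auto simp: p_def)
  have pm1: "\<And>i. \<pi> i \<le> 1"
  proof -
    fix i
    show "\<pi> i \<le> 1"
    proof (cases "i \<in> {2..<k}")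
      case True
      have "\<pi> i \<le> (\<Sum>i\<in>{2..<k}. \<pi> i)"
        using True by (intro member_le_sum) (auto simp: nn)
      then show ?thesis using c0 nn[of 0] by linarith
    next
      case False
      then have "i = 0 \<or> i = 1 \<or> k \<le> i" by auto
      then show ?thesis using c0 c1 big nn
        by (smt (verit) sum_nonneg)
    qed
  qed
  have fin: "\<And>i. i \<in> S \<Longrightarrow> a i \<subseteq> {..<k+1}" and dis: "\<And>i j. i \<in> S \<Longrightarrow> j \<in> S \<Longrightarrow> i \<noteq> j \<Longrightarrow> a i \<inter> a j = {}"
    using fa unfolding feasible_alloc_def by auto
  consider (A) "k \<in> S \<and> insert 0 {2..<k+1} \<subseteq> a k" | (B) "k+1 \<in> S \<and> {1..<k+1} \<subseteq> a (k+1)"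
    | (C) "\<not> (k \<in> S \<and> insert 0 {2..<k+1} \<subseteq> a k)" "\<not> (k+1 \<in> S \<and> {1..<k+1} \<subseteq> a (k+1))" by blast
  then show ?thesis
  proof cases
    case A
    have bd: "vv k i (a i) \<le> (if i = 1 then 2 else 0)" if i: "i \<in> S - {k}" for i
    proof -
      have d: "a i \<inter> a k = {}" using dis[of i k] i A by auto
      have "i < k + 2" using i S by auto
      moreover have "i \<noteq> k" using i by auto
      ultimately consider "i < k" | "i = k+1" by linarith
      then show ?thesis
      proof cases
        case 1
        show ?thesis
        proof (cases "i = 1")
          case False
          then have "i \<in> insert 0 {2..<k+1}" using 1 by auto
          then have "i \<in> a k" using A by blast
          then show ?thesis using d 1 False by (auto simp: vv_def)
        qed (use 1 in \<open>auto simp: vv_def\<close>)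
      next
        case 2
        have "k \<in> a k" using A k by auto
        then have "k \<notin> a i" using d by auto
        moreover have "k \<in> {1..<k+1}" "k \<in> insert 0 {2..<k+1}" using k by auto
        ultimately have "\<not> {1..<k+1} \<subseteq> a i" "\<not> insert 0 {2..<k+1} \<subseteq> a i" by blast+
        then show ?thesis using 2 k by (auto simp: vv_def)
      qed
    qed
    have "(\<Sum>i\<in>S. vv k i (a i)) = vv k k (a k) + (\<Sum>i\<in>S - {k}. vv k i (a i))"
      using A fS by (meson sum.remove)
    also have "(\<Sum>i\<in>S - {k}. vv k i (a i)) \<le> (\<Sum>i\<in>S - {k}. if i = 1 then 2 else 0)"
      by (rule sum_mono) (rule bd)
    also have "(\<Sum>i\<in>S - {k}. (if i = 1 then 2 else 0::real)) = (if 1 \<in> S then 2 else 0)"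
      using fS k by (simp add: sum.delta)
    also have "vv k k (a k) = 2 * real k - 3" using A by (simp add: vv_def)
    finally have L: "(\<Sum>i\<in>S. vv k i (a i)) \<le> 2 * real k - 3 + (if 1 \<in> S then 2 else 0)" by simp
    show ?thesis
    proof (cases "1 \<in> S")
      case True
      then have "p 1 = 0" by (simp add: p_def)
      then show ?thesis using L True P PP pC pp c0 by simp
    next
      case False
      have "(\<Sum>i\<in>{2..<k}. \<pi> i) \<ge> 0" using nn by (meson sum_nonneg)
      then show ?thesis using L P PP pC pp c0 c1 nn[of 1] False by simp
    qed
  next
    case B
    have bd: "vv k i (a i) \<le> (if i = 0 then 2 else 0)" if i: "i \<in> S - {k+1}" for i
    proof -
      have d: "a i \<inter> a (k+1) = {}" using dis[of i "k+1"] i B by auto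
      have "i < k + 2" using i S by auto
      moreover have "i \<noteq> k+1" using i by auto
      ultimately consider "i < k" | "i = k" by linarith
      then show ?thesis
      proof cases
        case 1
        show ?thesis
        proof (cases "i = 0")
          case False
          then have "i \<in> {1..<k+1}" using 1 by auto
          then have "i \<in> a (k+1)" using B by blast
          then show ?thesis using d 1 False by (auto simp: vv_def)
        qed (use 1 in \<open>auto simp: vv_def\<close>)
      next
        case 2
        have "k \<in> a (k+1)" using B k by auto
        then have "k \<notin> a i" using d by auto
        moreover have "k \<in> {1..<k+1}" "k \<in> insert 0 {2..<k+1}" using k by auto
        ultimately have "\<not> {1..<k+1} \<subseteq> a i" "\<not> insert 0 {2..<k+1} \<subseteq> a i" by blast+
        then show ?thesis using 2 k by (auto simp: vv_def)
      qed
    qed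
    have "(\<Sum>i\<in>S. vv k i (a i)) = vv k (k+1) (a (k+1)) + (\<Sum>i\<in>S - {k+1}. vv k i (a i))"
      using B fS by (meson sum.remove)
    also have "(\<Sum>i\<in>S - {k+1}. vv k i (a i)) \<le> (\<Sum>i\<in>S - {k+1}. if i = 0 then 2 else 0)"
      by (rule sum_mono) (rule bd)
    also have "(\<Sum>i\<in>S - {k+1}. (if i = 0 then 2 else 0::real)) = (if 0 \<in> S then 2 else 0)"
      using fS k by (simp add: sum.delta)
    also have "vv k (k+1) (a (k+1)) = 2 * real k - 3" using B by (simp add: vv_def)
    finally have L: "(\<Sum>i\<in>S. vv k i (a i)) \<le> 2 * real k - 3 + (if 0 \<in> S then 2 else 0)" by simp
    show ?thesis
    proof (cases "0 \<in> S")
      case True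
      then have "p 0 = 0" by (simp add: p_def)
      then show ?thesis using L True P PP pC pp c1 by simp
    next
      case False
      have "(\<Sum>i\<in>{2..<k}. \<pi> i) \<ge> 0" using nn by (meson sum_nonneg)
      then show ?thesis using L P PP pC pp c0 c1 nn[of 0] False by simp
    qed
  next
    case C
    have gk: "g k = 0" "g (k+1) = 0" using C unfolding g_def vv_def by auto
    have mid: "(\<Sum>i<k. g i + p i) \<le> (\<Sum>i<k. 2)"
      by (rule sum_mono) (use pm1 in \<open>auto simp: g_def p_def vv_def intro: order.trans[OF pm1]\<close>)
    have "(\<Sum>i<k+2. g i) + (\<Sum>i<k+2. p i) \<le> 2 * real k"
      using sumN[of g k] sumN[of p k] gk pk mid by (simp add: sum.distrib)
    then show ?thesis using G P by linarith
  qed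
qed

lemma feas_aa: "feasible_alloc {..<k+1} S (aa k)"
  unfolding feasible_alloc_def aa_def by auto

lemma sum_aa: assumes k: "2 \<le> k" shows "(\<Sum>i<k+2. vv k i (aa k i)) = 2 * real k"
proof -
  have "(\<Sum>i<k. vv k i (aa k i)) = (\<Sum>i<k. 2)"
    by (rule sum.cong) (auto simp: vv_def aa_def)
  then show ?thesis using k sumN[of "\<lambda>i. vv k i (aa k i)" k] vv_empty[OF k, of k] vv_empty[OF k, of "k+1"]
    by (simp add: aa_def)
qed

lemma wN: assumes k: "2 \<le> k" shows "wval {..<k+1} (vv k) {..<k+2} = 2 * real k"
proof (rule antisym)
  show "wval {..<k+1} (vv k) {..<k+2} \<le> 2 * real k"
    using key[OF k _ _, of "{..<k+2}" _ "\<lambda>_. 0"] by (intro wval_le) auto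
  show "2 * real k \<le> wval {..<k+1} (vv k) {..<k+2}"
    using wval_ge[of "{..<k+1}" "{..<k+2}" "aa k" "vv k"] feas_aa sum_aa[OF k] by simp
qed

lemma core_suff:
  fixes \<pi> :: "nat \<Rightarrow> real"
  assumes k: "2 \<le> k"
    and nn: "\<And>i. \<pi> i \<ge> 0" and big: "\<And>i. k \<le> i \<Longrightarrow> \<pi> i = 0"
    and c0: "\<pi> 0 + (\<Sum>i\<in>{2..<k}. \<pi> i) \<le> 1" and c1: "\<pi> 1 + (\<Sum>i\<in>{2..<k}. \<pi> i) \<le> 1"
  shows "\<pi> \<in> core {..<k+2} {..<k+1} (vv k)"
  unfolding core_def
proof (intro CollectI conjI allI impI ballI)
  fix i assume "i \<notin> {..<k+2}" then show "\<pi> i = 0" using big by auto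
next
  fix i show "0 \<le> \<pi> i" by (rule nn)
next
  fix S assume S: "S \<subseteq> {..<k+2}"
  have fS: "finite S" using S finite_subset by blast
  have "wval {..<k+1} (vv k) S \<le> 2 * real k - (\<Sum>i\<in>{..<k+2} - S. \<pi> i)"
    by (rule wval_le) (use key[OF k S _ nn big c0 c1] fS in auto)
  then show "(\<Sum>i\<in>{..<k+2} - S. \<pi> i) \<le> wval {..<k+1} (vv k) {..<k+2} - wval {..<k+1} (vv k) S"
    using wN[OF k] by linarith
qed

definition pm :: "nat \<Rightarrow> real" where "pm i = (if i < 2 then 1 else 0)"

lemma pm_core: assumes k: "2 \<le> k" shows "pm \<in> core {..<k+2} {..<k+1} (vv k)"
  by (rule core_suff[OF k]) (use k in \<open>auto simp: pm_def\<close>)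

lemma core_nec:
  assumes k: "2 \<le> k" and c: "\<pi> \<in> core {..<k+2} {..<k+1} (vv k)"
  shows "(\<Sum>i<k+2. \<pi> i) \<le> 2" and "(\<Sum>i<k+2. \<pi> i) \<ge> 2 \<Longrightarrow> \<pi> = pm"
proof -
  have out: "\<And>i. i \<notin> {..<k+2} \<Longrightarrow> \<pi> i = 0" and nn: "\<And>i. i \<in> {..<k+2} \<Longrightarrow> \<pi> i \<ge> 0"
    and cs: "\<And>S. S \<subseteq> {..<k+2} \<Longrightarrow> (\<Sum>i\<in>{..<k+2} - S. \<pi> i) \<le> 2 * real k - wval {..<k+1} (vv k) S"
    using c wN[OF k] unfolding core_def by auto
  have pL: "\<pi> L \<le> 0" if L: "L \<in> {k, k+1}" for L
  proof -
    have Lin: "L \<in> {..<k+2}" using L by auto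
    have "(\<Sum>i<k+2. vv k i (aa k i)) = vv k L (aa k L) + (\<Sum>i\<in>{..<k+2} - {L}. vv k i (aa k i))"
      using Lin by (meson finite_lessThan sum.remove)
    moreover have "vv k L (aa k L) = 0" using L vv_empty[OF k, of L] by (auto simp: aa_def)
    ultimately have "(\<Sum>i\<in>{..<k+2} - {L}. vv k i (aa k i)) = 2 * real k"
      using sum_aa[OF k] by simp
    then have "2 * real k \<le> wval {..<k+1} (vv k) ({..<k+2} - {L})"
      using wval_ge[of "{..<k+1}" "{..<k+2} - {L}" "aa k" "vv k"] feas_aa by simp
    moreover have "{..<k+2} - ({..<k+2} - {L}) = {L}" using Lin by auto
    ultimately show ?thesis using cs[of "{..<k+2} - {L}"] by auto
  qed
  have pk: "\<pi> k \<le> 0" "\<pi> (k+1) \<le> 0" using pL by auto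
  have nk: "\<pi> k \<ge> 0" "\<pi> (k+1) \<ge> 0" "\<pi> 0 \<ge> 0" "\<pi> 1 \<ge> 0" using nn k by auto
  have nm: "\<forall>i\<in>{2..<k}. \<pi> i \<ge> 0" using nn by auto
  have sC: "(\<Sum>i\<in>{2..<k}. \<pi> i) \<ge> 0" using nm by (meson sum_nonneg)
  have sCc: "(\<Sum>i\<in>{2..<k}. if i \<notin> S then \<pi> i else 0) = (\<Sum>i\<in>{2..<k}. \<pi> i)"
    if "S \<inter> {2..<k} = {}" for S using that by (intro sum.cong) auto
  define e where "e = (\<lambda>i::nat. if i = k then insert 0 {2..<k+1} else if i = 1 then {1} else {})"
  have fe: "feasible_alloc {..<k+1} {k, 1} e" using k unfolding e_def feasible_alloc_def by auto
  have "(\<Sum>i\<in>{k,1}. vv k i (e i)) = 2 * real k - 1" using k by (simp add: vv_def e_def)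
  then have "2 * real k - 1 \<le> wval {..<k+1} (vv k) {k, 1}"
    using wval_ge[OF _ _ fe, of "vv k"] by simp
  then have r0: "(\<Sum>i\<in>{..<k+2} - {k, 1}. \<pi> i) \<le> 1" using cs[of "{k, 1}"] k by auto
  have "(\<Sum>i\<in>{..<k+2} - {k, 1}. \<pi> i) = \<pi> 0 + (\<Sum>i\<in>{2..<k}. \<pi> i) + \<pi> (k+1)"
    using sumP[of \<pi> k "{k,1}"] sumN[of "\<lambda>i. if i \<notin> {k,1} then \<pi> i else 0" k]
      sumk[OF k, of "\<lambda>i. if i \<notin> {k,1} then \<pi> i else 0"] sCc[of "{k,1}"] k by simp
  then have c0: "\<pi> 0 + (\<Sum>i\<in>{2..<k}. \<pi> i) \<le> 1" using r0 nk by linarith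
  define f where "f = (\<lambda>i::nat. if i = k+1 then {1..<k+1} else if i = 0 then {0} else {})"
  have ff: "feasible_alloc {..<k+1} {k+1, 0} f" using k unfolding f_def feasible_alloc_def by auto
  have "(\<Sum>i\<in>{k+1,0}. vv k i (f i)) = 2 * real k - 1" using k by (simp add: vv_def f_def)
  then have "2 * real k - 1 \<le> wval {..<k+1} (vv k) {k+1, 0}"
    using wval_ge[OF _ _ ff, of "vv k"] by simp
  then have r1: "(\<Sum>i\<in>{..<k+2} - {k+1, 0}. \<pi> i) \<le> 1" using cs[of "{k+1, 0}"] k by auto
  have "(\<Sum>i\<in>{..<k+2} - {k+1, 0}. \<pi> i) = \<pi> 1 + (\<Sum>i\<in>{2..<k}. \<pi> i) + \<pi> k"
    using sumP[of \<pi> k "{k+1,0}"] sumN[of "\<lambda>i. if i \<notin> {k+1,0} then \<pi> i else 0" k]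
      sumk[OF k, of "\<lambda>i. if i \<notin> {k+1,0} then \<pi> i else 0"] sCc[of "{k+1,0}"] k by simp
  then have c1: "\<pi> 1 + (\<Sum>i\<in>{2..<k}. \<pi> i) \<le> 1" using r1 nk by linarith
  have tot: "(\<Sum>i<k+2. \<pi> i) = \<pi> 0 + \<pi> 1 + (\<Sum>i\<in>{2..<k}. \<pi> i) + \<pi> k + \<pi> (k+1)"
    using sumN[of \<pi> k] sumk[OF k, of \<pi>] by simp
  show "(\<Sum>i<k+2. \<pi> i) \<le> 2" using tot c0 c1 sC pk by linarith
  assume ge: "(\<Sum>i<k+2. \<pi> i) \<ge> 2"
  have z0: "\<pi> 0 = 1" using tot ge c0 c1 sC pk nk by linarith
  have z1: "\<pi> 1 = 1" using tot ge c0 c1 sC pk nk by linarith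
  have z2: "(\<Sum>i\<in>{2..<k}. \<pi> i) = 0" using tot ge c0 c1 sC pk nk by linarith
  have z3: "\<pi> k = 0" "\<pi> (k+1) = 0" using pk nk by linarith+
  have zm: "\<forall>i\<in>{2..<k}. \<pi> i = 0" using z2 nm sum_nonneg_eq_0_iff[of "{2..<k}" \<pi>] by auto
  show "\<pi> = pm"
  proof
    fix i
    consider "i = 0" | "i = 1" | "i \<in> {2..<k}" | "i = k" | "i = k+1" | "i \<notin> {..<k+2}"
      by force
    then show "\<pi> i = pm i"
    proof cases
      case 6 then show ?thesis using out k by (auto simp: pm_def)
    qed (use z0 z1 z3 zm k in \<open>auto simp: pm_def\<close>)
  qed
qed

theorem lemma1:
  fixes k :: nat
  assumes "k \<ge> 2"
  shows "\<exists>N M v a. finite N \<and> finite M \<and> is_valuation N M v \<and> efficient_alloc N M v a \<and>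
           card (winners N a) = k \<and> (\<exists>!\<pi>. is_MRC N M v \<pi>) \<and>
           (\<forall>\<pi>. is_MRC N M v \<pi> \<longrightarrow>
              card {i\<in>winners N a. \<pi> i = 0} = k - 2 \<and>
              (\<forall>i\<in>winners N a. \<pi> i = 0 \<longrightarrow> (\<exists>\<pi>'\<in>core N M v. \<pi>' i > 0)))"
proof -
  have k: "2 \<le> k" using assms .
  have pmsum: "(\<Sum>i<k+2. pm i) = 2" using sumN[of pm k] sumk[OF k, of pm] k by (simp add: pm_def)
  have mrc: "is_MRC {..<k+2} {..<k+1} (vv k) \<pi> \<longleftrightarrow> \<pi> = pm" for \<pi>
  proof
    assume "is_MRC {..<k+2} {..<k+1} (vv k) \<pi>"
    then show "\<pi> = pm" using core_nec[OF k] pm_core[OF k] pmsum unfolding is_MRC_def by force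
  next
    assume "\<pi> = pm"
    then show "is_MRC {..<k+2} {..<k+1} (vv k) \<pi>"
      using core_nec(1)[OF k] pm_core[OF k] pmsum unfolding is_MRC_def by auto
  qed
  have win: "winners {..<k+2} (aa k) = {..<k}" unfolding winners_def aa_def by auto
  have val: "is_valuation {..<k+2} {..<k+1} (vv k)"
    unfolding is_valuation_def using vv_empty[OF k] vv_nonneg[OF k] by auto
  have eff: "efficient_alloc {..<k+2} {..<k+1} (vv k) (aa k)"
    unfolding efficient_alloc_def using feas_aa sum_aa[OF k] wN[OF k] by simp
  have zs: "{i\<in>{..<k}. pm i = 0} = {2..<k}" by (auto simp: pm_def)
  have other: "\<exists>\<pi>'\<in>core {..<k+2} {..<k+1} (vv k). \<pi>' i > 0" if i: "i \<in> {..<k}" "pm i = 0" for i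
  proof -
    define q where "q = (\<lambda>j::nat. if j = 0 \<or> j = 1 \<or> j = i then (1/2::real) else 0)"
    have i2: "i \<in> {2..<k}" using i by (auto simp: pm_def split: if_splits)
    have "(\<Sum>j\<in>{2..<k}. q j) = (\<Sum>j\<in>{2..<k}. if j = i then 1/2 else 0)"
      by (rule sum.cong) (auto simp: q_def)
    also have "\<dots> = 1/2" using i2 by simp
    finally have s: "(\<Sum>j\<in>{2..<k}. q j) = 1/2" .
    have "q \<in> core {..<k+2} {..<k+1} (vv k)"
      using i2 s by (intro core_suff[OF k]) (auto simp: q_def)
    moreover have "q i > 0" by (simp add: q_def)
    ultimately show ?thesis by blast
  qed
  show ?thesis
    apply (rule exI[of _ "{..<k+2}"], rule exI[of _ "{..<k+1}"], rule exI[of _ "vv k"], rule exI[of _ "aa k"])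
    using val eff win zs other mrc k by auto
qed

end
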